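(* Let $G$ be a connected graph with $|V(G)| \ge 3$. If $\det(G) \neq 1$, then $\frac{1}{2}\det(G) \le \det'(G) \le \det(G)$.
   Context: A vertex subset $S$ of $G$ is a vertex determining set if the only automorphism of $G$ fixing every vertex of $S$ is the identity; the determining number $\det(G)$ is the minimum size of a vertex determining set. For a graph $G$ with at most one isolated vertex and no component isomorphic to $K_2$, an edge subset $T$ is an edge determining set if the only automorphism $\phi$ of $G$ satisfying $\{\phi(u),\phi(v)\}=\{u,v\}$ for all $\{u,v\}\in T$ is the identity; the determining index $\det'(G)$ is the minimum size of an edge determining set. *)

theory Defs
  imports Complex_Main
begin

definition simple_graph :: "'a set \<Rightarrow> 'a set set \<Rightarrow> bool" where
  "simple_graph V E \<longleftrightarrow> finite V \<and>
     (\<forall>e\<in>E. \<exists>u v. u \<in> V \<and> v \<in> V \<and> u \<noteq> v \<and> e = {u, v})"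

definition adj_rel :: "'a set set \<Rightarrow> ('a \<times> 'a) set" where
  "adj_rel E = {(u, v). {u, v} \<in> E}"

definition connected_graph :: "'a set \<Rightarrow> 'a set set \<Rightarrow> bool" where
  "connected_graph V E \<longleftrightarrow> (\<forall>u\<in>V. \<forall>v\<in>V. (u, v) \<in> (adj_rel E)\<^sup>*)"

definition graph_aut :: "'a set \<Rightarrow> 'a set set \<Rightarrow> ('a \<Rightarrow> 'a) \<Rightarrow> bool" where
  "graph_aut V E \<phi> \<longleftrightarrow> bij_betw \<phi> V V \<and>
     (\<forall>u\<in>V. \<forall>v\<in>V. {u, v} \<in> E \<longleftrightarrow> {\<phi> u, \<phi> v} \<in> E)"

definition vertex_determining :: "'a set \<Rightarrow> 'a set set \<Rightarrow> 'a set \<Rightarrow> bool" where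
  "vertex_determining V E S \<longleftrightarrow> S \<subseteq> V \<and>
     (\<forall>\<phi>. graph_aut V E \<phi> \<and> (\<forall>x\<in>S. \<phi> x = x) \<longrightarrow> (\<forall>x\<in>V. \<phi> x = x))"

definition determining_number :: "'a set \<Rightarrow> 'a set set \<Rightarrow> nat" where
  "determining_number V E = Min (card ` {S. vertex_determining V E S})"

definition edge_determining :: "'a set \<Rightarrow> 'a set set \<Rightarrow> 'a set set \<Rightarrow> bool" where
  "edge_determining V E T \<longleftrightarrow> T \<subseteq> E \<and>
     (\<forall>\<phi>. graph_aut V E \<phi> \<and> (\<forall>u v. {u, v} \<in> T \<longrightarrow> {\<phi> u, \<phi> v} = {u, v})
          \<longrightarrow> (\<forall>x\<in>V. \<phi> x = x))"

definition determining_index :: "'a set \<Rightarrow> 'a set set \<Rightarrow> nat" where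
  "determining_index V E = Min (card ` {T. edge_determining V E T})"

end

theory Submission
  imports Defs
begin

lemma R_V:
  assumes "simple_graph V E" "(x,y) \<in> adj_rel E"
  shows "x \<in> V \<and> y \<in> V \<and> x \<noteq> y \<and> {x,y} \<in> E"
proof -
  have e: "{x,y} \<in> E" using assms(2) by (simp add: adj_rel_def)
  then obtain u v where "u \<in> V" "v \<in> V" "u \<noteq> v" "{x,y} = {u,v}"
    using assms(1) unfolding simple_graph_def by blast
  then show ?thesis using e by (auto simp: doubleton_eq_iff)
qed

lemma aut_pow:
  assumes "simple_graph V E" "graph_aut V E \<psi>"
  shows "x \<in> V \<Longrightarrow> (x,y) \<in> adj_rel E ^^ n \<Longrightarrow> (\<psi> x, \<psi> y) \<in> adj_rel E ^^ n"
proof (induction n arbitrary: x)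
  case 0
  then show ?case by simp
next
  case (Suc n)
  then obtain z where z: "(x,z) \<in> adj_rel E" "(z,y) \<in> adj_rel E ^^ n"
    using relpow_Suc_D2 by metis
  have zV: "z \<in> V" "{x,z} \<in> E" using R_V[OF assms(1) z(1)] by auto
  have "{\<psi> x, \<psi> z} \<in> E" using assms(2) zV Suc.prems unfolding graph_aut_def by blast
  then have "(\<psi> x, \<psi> z) \<in> adj_rel E" by (simp add: adj_rel_def)
  then show ?case using Suc.IH[OF zV(1) z(2)] by (rule relpow_Suc_I2)
qed

lemma edge_cases:
  "{\<psi> u, \<psi> v} = {u, v} \<Longrightarrow> (\<psi> u = u \<and> \<psi> v = v) \<or> (\<psi> u = v \<and> \<psi> v = u)"
  by (auto simp: doubleton_eq_iff)

lemma leave_set: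
  assumes "(x,y) \<in> R\<^sup>*" "x \<in> A" "y \<notin> A"
  shows "\<exists>u z. u \<in> A \<and> z \<notin> A \<and> (u,z) \<in> R"
  using assms by (induction rule: rtrancl_induct) auto

lemma upper:
  assumes sg: "simple_graph V E" and conn: "connected_graph V E" and cV: "card V \<ge> 3"
    and vd: "vertex_determining V E S" and cS: "card S \<ge> 2"
  shows "\<exists>T. edge_determining V E T \<and> card T \<le> card S"
proof -
  define R where "R = adj_rel E"
  have SV: "S \<subseteq> V" using vd by (simp add: vertex_determining_def)
  have finV: "finite V" using sg by (simp add: simple_graph_def)
  have finS: "finite S" using SV finV finite_subset by blast
  obtain v1 where v1: "v1 \<in> S" using cS by fastforce
  have "card (S - {v1}) \<ge> 1" using cS v1 finS by simp
  then have "S - {v1} \<noteq> {}" by (metis card.empty not_one_le_zero)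
  then obtain v2 where v2: "v2 \<in> S" "v2 \<noteq> v1" by blast
  define dd where "dd x y = (LEAST n. (x,y) \<in> R ^^ n)" for x y
  have ex: "\<exists>n. (x,y) \<in> R ^^ n" if "x \<in> V" "y \<in> V" for x y
    using conn that unfolding connected_graph_def R_def by (metis rtrancl_power)
  have dd1: "(x,y) \<in> R ^^ (dd x y)" if "x \<in> V" "y \<in> V" for x y
    unfolding dd_def using ex[OF that] by (rule LeastI_ex)
  have dd2: "(x,y) \<notin> R ^^ n" if "n < dd x y" for x y n
    using that unfolding dd_def by (rule not_less_Least)
  have rv: "x \<in> V \<and> y \<in> V \<and> x \<noteq> y \<and> {x,y} \<in> E" if "(x,y) \<in> R" for x y
    using R_V[OF sg] that R_def by blast
  have ap: "(\<psi> x, \<psi> y) \<in> R ^^ n" if "graph_aut V E \<psi>" "x \<in> V" "(x,y) \<in> R ^^ n" for \<psi> x y n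
    using aut_pow[OF sg that(1) that(2)] that(3) R_def by blast
  define wsel where "wsel x = (SOME w. (x,w) \<in> R \<and> (w,v1) \<in> R ^^ (dd x v1 - 1))" for x
  have wsel: "(x, wsel x) \<in> R \<and> (wsel x, v1) \<in> R ^^ (dd x v1 - 1) \<and> dd x v1 - 1 < dd x v1"
    if "x \<in> V" "x \<noteq> v1" for x
  proof -
    have v1V: "v1 \<in> V" using v1 SV by blast
    have d: "(x,v1) \<in> R ^^ dd x v1" using dd1[OF that(1) v1V] .
    have "dd x v1 \<noteq> 0" using d that(2) by (metis relpow_0_E)
    then obtain m where m: "dd x v1 = Suc m" using not0_implies_Suc by blast
    then obtain w where "(x,w) \<in> R" "(w,v1) \<in> R ^^ m" using d relpow_Suc_D2 by metis
    then have "\<exists>w. (x,w) \<in> R \<and> (w,v1) \<in> R ^^ (dd x v1 - 1)" using m by auto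
    then show ?thesis unfolding wsel_def using m by (metis (mono_tags, lifting) someI_ex lessI diff_Suc_1)
  qed
  define T0 where "T0 = (\<lambda>x. {x, wsel x}) ` (S - {v1,v2})"
  have T0E: "T0 \<subseteq> E" unfolding T0_def using wsel rv SV by blast
  have cT0: "card T0 \<le> card S - 2"
  proof -
    have "card T0 \<le> card (S - {v1,v2})" unfolding T0_def using card_image_le finS by blast
    also have "\<dots> = card S - 2" using v1 v2 finS by (simp add: card_Diff_subset)
    finally show ?thesis .
  qed
  have fix_rest: "\<psi> x = x" if aut: "graph_aut V E \<psi>" and f1: "\<psi> v1 = v1"
     and pres: "\<forall>u v. {u,v} \<in> T0 \<longrightarrow> {\<psi> u, \<psi> v} = {u,v}" and x: "x \<in> S - {v1,v2}" for \<psi> x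
  proof -
    have xV: "x \<in> V" "x \<noteq> v1" using x SV by auto
    note w = wsel[OF xV]
    have "{x, wsel x} \<in> T0" unfolding T0_def using x by blast
    then have "{\<psi> x, \<psi> (wsel x)} = {x, wsel x}" using pres by blast
    then have c: "(\<psi> x = x) \<or> (\<psi> x = wsel x \<and> \<psi> (wsel x) = x)" using edge_cases by metis
    show ?thesis
    proof (rule ccontr)
      assume "\<psi> x \<noteq> x"
      then have sw: "\<psi> (wsel x) = x" using c by blast
      have "wsel x \<in> V" using w rv by blast
      then have "(\<psi> (wsel x), \<psi> v1) \<in> R ^^ (dd x v1 - 1)" using ap[OF aut] w by blast
      then have "(x, v1) \<in> R ^^ (dd x v1 - 1)" using sw f1 by simp
      then show False using dd2 w by blast
    qed
  qed
  have finish: "\<forall>x\<in>V. \<psi> x = x" if aut: "graph_aut V E \<psi>" and f1: "\<psi> v1 = v1" and f2: "\<psi> v2 = v2"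
     and pres: "\<forall>u v. {u,v} \<in> T0 \<longrightarrow> {\<psi> u, \<psi> v} = {u,v}" for \<psi>
  proof -
    have "\<forall>x\<in>S. \<psi> x = x" using fix_rest[OF aut f1 pres] f1 f2 by blast
    then show ?thesis using vd aut unfolding vertex_determining_def by blast
  qed
  show ?thesis
  proof (cases "(v1,v2) \<in> R")
    case True
    obtain c where c: "c \<in> V" "c \<notin> {v1,v2}"
    proof -
      have "card {v1,v2} = 2" using v2 by simp
      have "\<not> V \<subseteq> {v1,v2}"
      proof
        assume "V \<subseteq> {v1,v2}"
        then have "card V \<le> card {v1,v2}" by (intro card_mono) auto
        then show False using cV v2(2) by simp
      qed
      then show ?thesis using that by blast
    qed
    have vc: "(v1, c) \<in> R\<^sup>*" using conn c(1) v1 SV unfolding connected_graph_def R_def by blast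
    have "\<exists>u z. u \<in> {v1,v2} \<and> z \<notin> {v1,v2} \<and> (u,z) \<in> R"
      by (rule leave_set[OF vc]) (use c(2) in auto)
    then obtain u z where uz: "u \<in> {v1,v2}" "z \<notin> {v1,v2}" "(u,z) \<in> R" by blast
    define T where "T = {{v1,v2},{u,z}} \<union> T0"
    have TE: "T \<subseteq> E" using T0E rv[OF True] rv[OF uz(3)] unfolding T_def by blast
    have "card T \<le> card {{v1,v2},{u,z}} + card T0" unfolding T_def by (rule card_Un_le)
    also have "\<dots> \<le> 2 + card T0" by (simp add: card_insert_le_m1)
    also have "\<dots> \<le> card S" using cT0 cS by linarith
    finally have cT: "card T \<le> card S" .
    have "edge_determining V E T"
      unfolding edge_determining_def
    proof (intro conjI TE allI impI)
      fix \<psi> assume h: "graph_aut V E \<psi> \<and> (\<forall>u v. {u, v} \<in> T \<longrightarrow> {\<psi> u, \<psi> v} = {u, v})"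
      have e1: "{\<psi> v1, \<psi> v2} = {v1,v2}" using h unfolding T_def by blast
      have e2: "{\<psi> u, \<psi> z} = {u,z}" using h unfolding T_def by blast
      have "\<psi> u \<in> {v1,v2}" using uz(1) e1 by blast
      moreover have "\<psi> u \<in> {u,z}" using e2 by blast
      ultimately have fu: "\<psi> u = u" using uz(2) by blast
      have f12: "\<psi> v1 = v1 \<and> \<psi> v2 = v2" using edge_cases[OF e1] uz(1) fu v2(2) by auto
      show "\<forall>x\<in>V. \<psi> x = x"
        using finish[of \<psi>] h f12 unfolding T_def by blast
    qed
    then show ?thesis using cT by blast
  next
    case False
    have v1V: "v1 \<in> V" and v2V: "v2 \<in> V" using v1 v2 SV by auto
    define d where "d = dd v1 v2"
    have d: "(v1,v2) \<in> R ^^ d" using dd1[OF v1V v2V] d_def by simp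
    have "d \<noteq> 0" using d v2(2) by (metis relpow_0_E)
    moreover have "d \<noteq> 1" using d False by auto
    ultimately obtain m where m: "d = Suc (Suc m)" by (metis One_nat_def not0_implies_Suc)
    obtain a where a: "(v1,a) \<in> R" "(a,v2) \<in> R ^^ Suc m" using d m relpow_Suc_D2 by metis
    obtain b where b: "(a,b) \<in> R ^^ m" "(b,v2) \<in> R" using a(2) by auto
    have vb: "(v1,b) \<in> R ^^ Suc m" using a(1) b(1) by (rule relpow_Suc_I2)
    have aV: "a \<in> V" and bV: "b \<in> V" using rv a(1) rv b(2) by auto
    have nd: "(v1,v2) \<notin> R ^^ n" if "n < d" for n using dd2 that d_def by blast
    define T where "T = {{v1,a},{b,v2}} \<union> T0"
    have TE: "T \<subseteq> E" using T0E rv[OF a(1)] rv[OF b(2)] unfolding T_def by blast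
    have "card T \<le> card {{v1,a},{b,v2}} + card T0" unfolding T_def by (rule card_Un_le)
    also have "\<dots> \<le> 2 + card T0" by (simp add: card_insert_le_m1)
    also have "\<dots> \<le> card S" using cT0 cS by linarith
    finally have cT: "card T \<le> card S" .
    have "edge_determining V E T"
      unfolding edge_determining_def
    proof (intro conjI TE allI impI)
      fix \<psi> assume h: "graph_aut V E \<psi> \<and> (\<forall>u v. {u, v} \<in> T \<longrightarrow> {\<psi> u, \<psi> v} = {u, v})"
      have aut: "graph_aut V E \<psi>" using h by blast
      have e1: "{\<psi> v1, \<psi> a} = {v1,a}" using h unfolding T_def by blast
      have e2: "{\<psi> b, \<psi> v2} = {b,v2}" using h unfolding T_def by blast
      note c1 = edge_cases[OF e1] and c2 = edge_cases[OF e2]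
      have f1: "\<psi> v1 = v1"
      proof (rule ccontr)
        assume "\<psi> v1 \<noteq> v1"
        then have sa: "\<psi> a = v1" using c1 by blast
        show False using c2
        proof
          assume "\<psi> b = b \<and> \<psi> v2 = v2"
          then have "(v1,v2) \<in> R ^^ Suc m" using ap[OF aut aV a(2)] sa by simp
          moreover have "Suc m < d" "m < d" using m by auto
          ultimately show False using nd by blast
        next
          assume "\<psi> b = v2 \<and> \<psi> v2 = b"
          then have "(v1,v2) \<in> R ^^ m" using ap[OF aut aV b(1)] sa by simp
          moreover have "Suc m < d" "m < d" using m by auto
          ultimately show False using nd by blast
        qed
      qed
      have f2: "\<psi> v2 = v2"
      proof (rule ccontr)
        assume "\<psi> v2 \<noteq> v2"
        then have "\<psi> b = v2" using c2 by blast
        then have "(v1,v2) \<in> R ^^ Suc m" using ap[OF aut v1V vb] f1 by simp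
        moreover have "Suc m < d" "m < d" using m by auto
          ultimately show False using nd by blast
      qed
      show "\<forall>x\<in>V. \<psi> x = x"
        using finish[of \<psi>] h f1 f2 unfolding T_def by blast
    qed
    then show ?thesis using cT by blast
  qed
qed

theorem corollary1:
  fixes V :: "'a set" and E :: "'a set set"
  assumes "simple_graph V E"
    and "connected_graph V E"
    and "card V \<ge> 3"
    and "determining_number V E \<noteq> 1"
  shows "real (determining_number V E) / 2 \<le> real (determining_index V E)
         \<and> determining_index V E \<le> determining_number V E"
proof -
  have finV: "finite V" using assms(1) by (simp add: simple_graph_def)
  have EV: "E \<subseteq> Pow V" using assms(1) unfolding simple_graph_def by fastforce
  have finE: "finite E" using EV finV finite_subset by blast
  have fin1: "finite (card ` {S. vertex_determining V E S})"
  proof -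
    have "{S. vertex_determining V E S} \<subseteq> Pow V" by (auto simp: vertex_determining_def)
    then show ?thesis using finV finite_subset by blast
  qed
  have fin2: "finite (card ` {T. edge_determining V E T})"
  proof -
    have "{T. edge_determining V E T} \<subseteq> Pow E" by (auto simp: edge_determining_def)
    then show ?thesis using finE finite_subset by blast
  qed
  have "vertex_determining V E V" by (simp add: vertex_determining_def)
  then have "determining_number V E \<in> card ` {S. vertex_determining V E S}"
    unfolding determining_number_def using fin1 by (intro Min_in) auto
  then obtain S where S: "vertex_determining V E S" "card S = determining_number V E" by auto
  have finS: "finite S" using S(1) finV finite_subset by (auto simp: vertex_determining_def)
  obtain T where T: "edge_determining V E T" "card T \<le> card S"
  proof (cases "card S = 0")
    case True
    then have "S = {}" using finS by simp
    then have "edge_determining V E {}" using S(1)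
      by (simp add: edge_determining_def vertex_determining_def)
    then show ?thesis using that by simp
  next
    case False
    then have "card S \<ge> 2" using S(2) assms(4) by linarith
    then show ?thesis using upper[OF assms(1-3) S(1)] that by blast
  qed
  have up: "determining_index V E \<le> determining_number V E"
    unfolding determining_index_def using T S(2) fin2
    by (metis (mono_tags, lifting) Min_le image_eqI mem_Collect_eq order_trans)
  have "determining_index V E \<in> card ` {T. edge_determining V E T}"
    unfolding determining_index_def using fin2 T(1) by (intro Min_in) auto
  then obtain T' where T': "edge_determining V E T'" "card T' = determining_index V E" by auto
  have T'E: "T' \<subseteq> E" using T'(1) by (simp add: edge_determining_def)
  have vd: "vertex_determining V E (\<Union>T')"
    unfolding vertex_determining_def
  proof (intro conjI allI impI)
    show "\<Union>T' \<subseteq> V" using T'E EV by blast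
    fix \<phi> assume h: "graph_aut V E \<phi> \<and> (\<forall>x\<in>\<Union>T'. \<phi> x = x)"
    have "\<forall>u v. {u,v} \<in> T' \<longrightarrow> {\<phi> u, \<phi> v} = {u,v}" using h by auto
    then show "\<forall>x\<in>V. \<phi> x = x" using T'(1) h unfolding edge_determining_def by blast
  qed
  have c2: "card e = 2" if "e \<in> T'" for e
  proof -
    have "e \<in> E" using T'E that by blast
    then obtain u v where "u \<noteq> v" "e = {u,v}"
      using bspec[OF conjunct2[OF assms(1)[unfolded simple_graph_def]]] by blast
    then show ?thesis by simp
  qed
  have "determining_number V E \<le> card (\<Union>T')"
    unfolding determining_number_def using vd fin1 by (intro Min_le) auto
  also have "\<dots> \<le> sum card T'" by (rule card_Union_le_sum_card)
  also have "\<dots> = sum (\<lambda>_. 2) T'" using c2 by (intro sum.cong) auto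
  also have "\<dots> = 2 * card T'" by simp
  finally have "determining_number V E \<le> 2 * determining_index V E" using T'(2) by simp
  then have "real (determining_number V E) \<le> 2 * real (determining_index V E)" by linarith
  then show ?thesis using up by simp
qed

end
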